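(* (Rohlin's Lemma for isometries) Let $S\subseteq\mathbb N$ be infinite. Then the set $\{g\in{\rm Iso}(\mathbb U): \exists n\in S\ g^n=1\}$ is dense in ${\rm Iso}(\mathbb U)$.
   Context: The Urysohn metric space $\mathbb U$ is, up to isometry, the unique complete separable metric space such that every isometric embedding of a finite metric space $\mathbf A$ into $\mathbb U$ extends to any one-point metric extension $\mathbf A\cup\{y\}$. ${\rm Iso}(\mathbb U)$ is its isometry group with the topology of pointwise convergence (basic neighbourhoods of the identity: $\{h: d(hx,x)<\epsilon\ \forall x\in\mathbf A\}$, $\mathbf A$ finite, $\epsilon>0$). *)

theory Defs
  imports "HOL-Analysis.Analysis"
begin

text \<open>A one-point metric extension of A is given by the distances
r a > 0 from the new point y to the points a of A, subject to the triangle inequalities.\<close>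
definition urysohn_extension_property :: "('a::metric_space) itself \<Rightarrow> bool" where
  "urysohn_extension_property _ \<longleftrightarrow>
     (\<forall>(A::'a set) (r::'a \<Rightarrow> real). finite A \<longrightarrow>
        (\<forall>a\<in>A. r a > 0) \<longrightarrow>
        (\<forall>a\<in>A. \<forall>b\<in>A. \<bar>r a - r b\<bar> \<le> dist a b \<and> dist a b \<le> r a + r b) \<longrightarrow>
        (\<exists>z. \<forall>a\<in>A. dist z a = r a))"

definition urysohn_space :: "('a::polish_space) itself \<Rightarrow> bool" where
  "urysohn_space T \<longleftrightarrow> urysohn_extension_property T"

definition isometries :: "('a::metric_space \<Rightarrow> 'a) set" where
  "isometries = {f. (\<forall>x y. dist (f x) (f y) = dist x y) \<and> surj f}"

end

theory Submission
  imports Defs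
begin

definition pm :: "'i set \<Rightarrow> ('i \<Rightarrow> 'i \<Rightarrow> real) \<Rightarrow> bool" where
"pm I \<rho> \<longleftrightarrow> (\<forall>i\<in>I. \<rho> i i = 0) \<and> (\<forall>i\<in>I. \<forall>j\<in>I. \<rho> i j = \<rho> j i)
   \<and> (\<forall>i\<in>I. \<forall>j\<in>I. \<forall>k\<in>I. \<rho> i k \<le> \<rho> i j + \<rho> j k)"

lemma pm_nonneg: "pm I \<rho> \<Longrightarrow> i \<in> I \<Longrightarrow> j \<in> I \<Longrightarrow> \<rho> i j \<ge> 0"
proof -
  assume a: "pm I \<rho>" "i \<in> I" "j \<in> I"
  then have "\<rho> i i \<le> \<rho> i j + \<rho> j i" "\<rho> i i = 0" "\<rho> j i = \<rho> i j" unfolding pm_def by blast+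
  then show ?thesis by linarith
qed
  
lemma ext_one:
  fixes e :: "'i \<Rightarrow> 'a::metric_space"
  assumes U: "urysohn_extension_property TYPE('a)"
    and pm: "pm I \<rho>" and L: "finite L" "L \<subseteq> I" "L \<noteq> {}" and i0: "i0 \<in> I"
    and iso: "\<forall>i\<in>L. \<forall>j\<in>L. dist (e i) (e j) = \<rho> i j"
  shows "\<exists>z. \<forall>l\<in>L. dist z (e l) = \<rho> i0 l"
proof (cases "\<exists>j\<in>L. \<rho> i0 j = 0")
  case True
  then obtain j where j: "j \<in> L" "\<rho> i0 j = 0" by blast
  have "dist (e j) (e l) = \<rho> i0 l" if "l \<in> L" for l
  proof -
    have "\<rho> i0 l \<le> \<rho> i0 j + \<rho> j l" "\<rho> j l \<le> \<rho> j i0 + \<rho> i0 l" "\<rho> j i0 = \<rho> i0 j"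
      using pm L i0 j that unfolding pm_def by blast+
    then show ?thesis using iso j that by auto
  qed
  then show ?thesis by blast
next
  case False
  define r where "r a = \<rho> i0 (inv_into L e a)" for a
  have r: "r (e l) = \<rho> i0 l" if "l \<in> L" for l
  proof -
    have m: "inv_into L e (e l) \<in> L" "e (inv_into L e (e l)) = e l"
      using that by (auto simp: inv_into_into f_inv_into_f)
    then have "\<rho> l (inv_into L e (e l)) = 0" using iso that by (metis dist_self)
    moreover have "\<rho> i0 l \<le> \<rho> i0 (inv_into L e (e l)) + \<rho> (inv_into L e (e l)) l"
       "\<rho> i0 (inv_into L e (e l)) \<le> \<rho> i0 l + \<rho> l (inv_into L e (e l))"
       "\<rho> (inv_into L e (e l)) l = \<rho> l (inv_into L e (e l))"
      using pm L i0 m(1) that unfolding pm_def by blast+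
    ultimately show ?thesis unfolding r_def by linarith
  qed
  have "\<exists>z. \<forall>a\<in>e ` L. dist z a = r a"
    using U unfolding urysohn_extension_property_def
  proof (elim allE impE)
    show "finite (e ` L)" using L by auto
    show "\<forall>a\<in>e ` L. 0 < r a"
    proof
      fix a assume "a \<in> e ` L"
      then obtain l where "l \<in> L" "a = e l" by auto
      then show "0 < r a" using r False pm_nonneg[OF pm i0, of l] L by force
    qed
    show "\<forall>a\<in>e ` L. \<forall>b\<in>e ` L. \<bar>r a - r b\<bar> \<le> dist a b \<and> dist a b \<le> r a + r b"
    proof (intro ballI)
      fix a b assume "a \<in> e ` L" "b \<in> e ` L"
      then obtain l m where lm: "l \<in> L" "a = e l" "m \<in> L" "b = e m" by auto
      have "\<rho> i0 l \<le> \<rho> i0 m + \<rho> m l" "\<rho> i0 m \<le> \<rho> i0 l + \<rho> l m" "\<rho> l m \<le> \<rho> l i0 + \<rho> i0 m"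
        "\<rho> l i0 = \<rho> i0 l" "\<rho> m l = \<rho> l m"
        using pm L i0 lm unfolding pm_def by blast+
      then show "\<bar>r a - r b\<bar> \<le> dist a b \<and> dist a b \<le> r a + r b"
        using lm r iso by auto
    qed
  qed
  then obtain z where "\<forall>a\<in>e ` L. dist z a = r a" by blast
  then show ?thesis using r by auto
qed

lemma ext_realize:
  fixes e :: "'i \<Rightarrow> 'a::metric_space"
  assumes U: "urysohn_extension_property TYPE('a)"
    and pm: "pm I \<rho>" and I: "finite I" and J: "J \<subseteq> I" "J \<noteq> {}"
    and iso: "\<forall>i\<in>J. \<forall>j\<in>J. dist (e i) (e j) = \<rho> i j"
  shows "\<exists>e'. (\<forall>i\<in>J. e' i = e i) \<and> (\<forall>i\<in>I. \<forall>j\<in>I. dist (e' i) (e' j) = \<rho> i j)"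
proof -
  have "finite K \<Longrightarrow> K \<subseteq> I \<Longrightarrow> \<exists>e'. (\<forall>i\<in>J. e' i = e i) \<and> (\<forall>i\<in>J \<union> K. \<forall>j\<in>J \<union> K. dist (e' i) (e' j) = \<rho> i j)"
    for K
  proof (induction K rule: finite_induct)
    case empty then show ?case using iso by auto
  next
    case (insert i0 K)
    have sub: "K \<subseteq> I" "i0 \<in> I" "i0 \<notin> K" using insert.prems insert.hyps by auto
    obtain e' where e': "\<forall>i\<in>J. e' i = e i" "\<forall>i\<in>J \<union> K. \<forall>j\<in>J \<union> K. dist (e' i) (e' j) = \<rho> i j"
      using insert.IH[OF sub(1)] by blast
    show ?case
    proof (cases "i0 \<in> J")
      case True
      then have "J \<union> insert i0 K = J \<union> K" by auto
      then show ?thesis using e'(1) e'(2) by (intro exI[of _ e'] conjI) simp_all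
    next
      case False
      have fin: "finite (J \<union> K)" using insert.hyps(1) J I finite_subset by blast
      obtain z where z: "\<forall>l\<in>J \<union> K. dist z (e' l) = \<rho> i0 l"
        using ext_one[OF U pm fin _ _ sub(2) e'(2)] sub J by blast
      define e'' where "e'' = e'(i0 := z)"
      have "\<forall>i\<in>J. e'' i = e i" using e' False unfolding e''_def by auto
      moreover have "\<forall>i\<in>J \<union> insert i0 K. \<forall>j\<in>J \<union> insert i0 K. dist (e'' i) (e'' j) = \<rho> i j"
      proof (intro ballI)
        fix i j assume ij: "i \<in> J \<union> insert i0 K" "j \<in> J \<union> insert i0 K"
        have I0: "i0 \<in> I" using sub by blast
        have s: "\<rho> i0 l = \<rho> l i0" if "l \<in> I" for l using pm I0 that unfolding pm_def by blast
        have z0: "\<rho> i0 i0 = 0" using pm I0 unfolding pm_def by blast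
        have JK: "J \<union> K \<subseteq> I" using sub J by blast
        have n: "i0 \<notin> J \<union> K" using sub False by blast
        have ij': "i = i0 \<or> i \<in> J \<union> K" "j = i0 \<or> j \<in> J \<union> K" using ij by blast+
        show "dist (e'' i) (e'' j) = \<rho> i j"
        proof (cases "i = i0")
          case True
          then show ?thesis
          proof (cases "j = i0")
            case True then show ?thesis using \<open>i = i0\<close> z0 by simp
          next
            case False then have "j \<in> J \<union> K" using ij' by blast
            then have "e'' j = e' j" "e'' i = z" using n \<open>i = i0\<close> unfolding e''_def by auto
            then show ?thesis using z \<open>j \<in> J \<union> K\<close> \<open>i = i0\<close> by simp
          qed
        next
          case False then have i: "i \<in> J \<union> K" using ij' by blast
          show ?thesis
          proof (cases "j = i0")
            case True
            then have "e'' j = z" "e'' i = e' i" using n i unfolding e''_def by auto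
            then show ?thesis using z i True s[of i] JK by (simp add: dist_commute) blast
          next
            case False then have "j \<in> J \<union> K" using ij' by blast
            then have "e'' j = e' j" "e'' i = e' i" using n i unfolding e''_def by auto
            then show ?thesis using e'(2) i \<open>j \<in> J \<union> K\<close> by simp
          qed
        qed
      qed
      ultimately show ?thesis by blast
    qed
  qed
  from this[OF I] show ?thesis using J by (simp add: Un_absorb1)
qed


definition good :: "nat \<Rightarrow> 'a::metric_space set \<Rightarrow> ('a \<Rightarrow> 'a) \<Rightarrow> bool" where
"good n F p \<longleftrightarrow> finite F \<and> p ` F \<subseteq> F \<and> (\<forall>x\<in>F. \<forall>y\<in>F. dist (p x) (p y) = dist x y)
   \<and> (\<forall>x\<in>F. (p ^^ n) x = x)"

lemma cyc_realize:
  fixes e :: "'i \<Rightarrow> 'a::metric_space"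
  assumes pm: "pm I \<rho>" and I: "finite I" and sI: "\<sigma> ` I \<subseteq> I"
    and inv: "\<forall>i\<in>I. \<forall>j\<in>I. \<rho> (\<sigma> i) (\<sigma> j) = \<rho> i j"
    and per: "\<forall>i\<in>I. (\<sigma> ^^ n) i = i"
    and iso: "\<forall>i\<in>I. \<forall>j\<in>I. dist (e i) (e j) = \<rho> i j"
  shows "\<exists>p. good n (e ` I) p \<and> (\<forall>i\<in>I. p (e i) = e (\<sigma> i))"
proof -
  define p where "p y = e (\<sigma> (inv_into I e y))" for y
  have pe: "p (e i) = e (\<sigma> i)" if i: "i \<in> I" for i
  proof -
    define j where "j = inv_into I e (e i)"
    have j: "j \<in> I" "e j = e i" using i unfolding j_def by (auto simp: inv_into_into f_inv_into_f)
    then have "\<rho> j i = 0" using iso i by (metis dist_self)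
    then have "\<rho> (\<sigma> j) (\<sigma> i) = 0" using inv j i by simp
    moreover have "\<sigma> j \<in> I" "\<sigma> i \<in> I" using sI j i by auto
    ultimately have "dist (e (\<sigma> j)) (e (\<sigma> i)) = 0" using iso by simp
    then show ?thesis unfolding p_def j_def[symmetric] by simp
  qed
  have pm_: "(p ^^ m) (e i) = e ((\<sigma> ^^ m) i) \<and> (\<sigma> ^^ m) i \<in> I" if "i \<in> I" for i m
  proof (induction m)
    case 0 then show ?case using that by simp
  next
    case (Suc m) then show ?case using pe sI by auto
  qed
  have "good n (e ` I) p"
    unfolding good_def
  proof (intro conjI ballI)
    show "finite (e ` I)" using I by simp
    show "p ` e ` I \<subseteq> e ` I" using pe sI by auto
  next
    fix x y assume "x \<in> e ` I" "y \<in> e ` I"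
    then obtain i j where ij: "i \<in> I" "j \<in> I" "x = e i" "y = e j" by auto
    moreover have "\<sigma> i \<in> I" "\<sigma> j \<in> I" using sI ij by auto
    ultimately show "dist (p x) (p y) = dist x y" using pe iso inv by auto
  next
    fix x assume "x \<in> e ` I"
    then obtain i where "i \<in> I" "x = e i" by auto
    then show "(p ^^ n) x = x" using pm_ per by simp
  qed
  then show ?thesis using pe by blast
qed

fun amal :: "'a::metric_space set \<Rightarrow> (nat \<Rightarrow> 'a \<Rightarrow> real) \<Rightarrow> 'a + nat \<Rightarrow> 'a + nat \<Rightarrow> real" where
  "amal X r (Inl f) (Inl f') = dist f f'"
| "amal X r (Inl f) (Inr k) = r k f"
| "amal X r (Inr k) (Inl f) = r k f"
| "amal X r (Inr k) (Inr l) = (if k = l then 0 else Min ((\<lambda>f. r k f + r l f) ` X))"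

lemma amal_pm:
  fixes X :: "'a::metric_space set"
  assumes X: "finite X" "X \<noteq> {}"
    and val: "\<forall>k\<in>Y. \<forall>f\<in>X. \<forall>f'\<in>X. \<bar>r k f - r k f'\<bar> \<le> dist f f' \<and> dist f f' \<le> r k f + r k f'"
  shows "pm (Inl ` X \<union> Inr ` Y) (amal X r)"
proof -
  have v1: "r k f \<le> r k f' + dist f f'" and v2: "dist f f' \<le> r k f + r k f'"
    if "k \<in> Y" "f \<in> X" "f' \<in> X" for k f f'
  proof -
    have "\<bar>r k f - r k f'\<bar> \<le> dist f f' \<and> dist f f' \<le> r k f + r k f'" using val that by blast
    then show "r k f \<le> r k f' + dist f f'" "dist f f' \<le> r k f + r k f'" by linarith+
  qed
  have rnn: "r k f \<ge> 0" if "k \<in> Y" "f \<in> X" for k f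
    using v2[OF that that(2)] by simp
  have mle: "Min ((\<lambda>f. r k f + r l f) ` X) \<le> r k f + r l f" if "f \<in> X" for k l f
    using X that by (intro Min_le) auto
  have mex: "\<exists>g\<in>X. Min ((\<lambda>f. r k f + r l f) ` X) = r k g + r l g" for k l
  proof -
    have "Min ((\<lambda>f. r k f + r l f) ` X) \<in> (\<lambda>f. r k f + r l f) ` X" using X by (intro Min_in) auto
    then show ?thesis by auto
  qed
  have mnn: "Min ((\<lambda>f. r k f + r l f) ` X) \<ge> 0" if "k \<in> Y" "l \<in> Y" for k l
    proof -
    obtain g where "g \<in> X" "Min ((\<lambda>f. r k f + r l f) ` X) = r k g + r l g" using mex by blast
    then show ?thesis using rnn that by simp
  qed
  have ann: "amal X r a b \<ge> 0" if "a \<in> Inl ` X \<union> Inr ` Y" "b \<in> Inl ` X \<union> Inr ` Y" for a b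
    using that rnn mnn by auto
  have tri: "amal X r a c \<le> amal X r a b + amal X r b c"
    if a: "a \<in> Inl ` X \<union> Inr ` Y" and b: "b \<in> Inl ` X \<union> Inr ` Y" and c: "c \<in> Inl ` X \<union> Inr ` Y" for a b c
  proof -
    have mA: "Inl f \<in> Inl ` X \<union> Inr ` Y \<Longrightarrow> f \<in> X" for f by auto
    have mB: "Inr f \<in> Inl ` X \<union> Inr ` Y \<Longrightarrow> f \<in> Y" for f by auto
    show ?thesis
    proof (cases a)
      case (Inl f) note ca = this
      show ?thesis
      proof (cases b)
        case (Inl g) note cb = this
        show ?thesis
        proof (cases c)
          case (Inl h) note cc = this
          have mem: "f \<in> X" "g \<in> X" "h \<in> X" "a = Inl f" "b = Inl g" "c = Inl h" using mA[OF a[unfolded ca]] mA[OF b[unfolded cb]] mA[OF c[unfolded cc]] ca cb cc by auto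
            note LLL = mem then show ?thesis by (simp add: dist_triangle)
        next
          case (Inr h) note cc = this
          have mem: "f \<in> X" "g \<in> X" "h \<in> Y" "a = Inl f" "b = Inl g" "c = Inr h" using mA[OF a[unfolded ca]] mA[OF b[unfolded cb]] mB[OF c[unfolded cc]] ca cb cc by auto
            note LLR = mem then show ?thesis using v1[of h f g] by simp
        qed
      next
        case (Inr g) note cb = this
        show ?thesis
        proof (cases c)
          case (Inl h) note cc = this
          have mem: "f \<in> X" "g \<in> Y" "h \<in> X" "a = Inl f" "b = Inr g" "c = Inl h" using mA[OF a[unfolded ca]] mB[OF b[unfolded cb]] mA[OF c[unfolded cc]] ca cb cc by auto
            note LRL = mem then show ?thesis using v2[of g f h] by simp
        next
          case (Inr h) note cc = this
          have mem: "f \<in> X" "g \<in> Y" "h \<in> Y" "a = Inl f" "b = Inr g" "c = Inr h" using mA[OF a[unfolded ca]] mB[OF b[unfolded cb]] mB[OF c[unfolded cc]] ca cb cc by auto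
            note LRR = mem
            show ?thesis
            proof (cases "g = h")
              case True then show ?thesis using LRR by simp
            next
              case False
              obtain q where q: "q \<in> X" "Min ((\<lambda>f. r g f + r h f) ` X) = r g q + r h q" using mex by blast
              have "r h f \<le> r h q + dist q f" "dist q f \<le> r g q + r g f" using v1[of h f q] v2[of g q f] LRR q by (simp_all add: dist_commute)
              then show ?thesis using LRR False q by simp
            qed
        qed
      qed
    next
      case (Inr f) note ca = this
      show ?thesis
      proof (cases b)
        case (Inl g) note cb = this
        show ?thesis
        proof (cases c)
          case (Inl h) note cc = this
          have mem: "f \<in> Y" "g \<in> X" "h \<in> X" "a = Inr f" "b = Inl g" "c = Inl h" using mB[OF a[unfolded ca]] mA[OF b[unfolded cb]] mA[OF c[unfolded cc]] ca cb cc by auto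
            note RLL = mem then show ?thesis using v1[of f h g] by (simp add: dist_commute)
        next
          case (Inr h) note cc = this
          have mem: "f \<in> Y" "g \<in> X" "h \<in> Y" "a = Inr f" "b = Inl g" "c = Inr h" using mB[OF a[unfolded ca]] mA[OF b[unfolded cb]] mB[OF c[unfolded cc]] ca cb cc by auto
            note RLR = mem
            show ?thesis
            proof (cases "f = h")
              case True then show ?thesis using RLR rnn by simp
            next
              case False then show ?thesis using RLR mle by simp
            qed
        qed
      next
        case (Inr g) note cb = this
        show ?thesis
        proof (cases c)
          case (Inl h) note cc = this
          have mem: "f \<in> Y" "g \<in> Y" "h \<in> X" "a = Inr f" "b = Inr g" "c = Inl h" using mB[OF a[unfolded ca]] mB[OF b[unfolded cb]] mA[OF c[unfolded cc]] ca cb cc by auto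
            note RRL = mem
            show ?thesis
            proof (cases "f = g")
              case True then show ?thesis using RRL by simp
            next
              case False
              obtain q where q: "q \<in> X" "Min ((\<lambda>x. r f x + r g x) ` X) = r f q + r g q" using mex by blast
              have "r f h \<le> r f q + dist q h" "dist q h \<le> r g q + r g h" using v1[of f h q] v2[of g q h] RRL q by (simp_all add: dist_commute)
              then show ?thesis using RRL False q by simp
            qed
        next
          case (Inr h) note cc = this
          have mem: "f \<in> Y" "g \<in> Y" "h \<in> Y" "a = Inr f" "b = Inr g" "c = Inr h" using mB[OF a[unfolded ca]] mB[OF b[unfolded cb]] mB[OF c[unfolded cc]] ca cb cc by auto
            note RRR = mem
            show ?thesis
            proof (cases "f = h")
              case True then show ?thesis using RRR ann[OF a b] ann[OF b c] by simp
            next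
              case fh: False
              show ?thesis
              proof (cases "f = g \<or> g = h")
                case True then show ?thesis using RRR by auto
              next
                case False
                obtain q where q: "q \<in> X" "Min ((\<lambda>x. r f x + r g x) ` X) = r f q + r g q" using mex by blast
                obtain q' where q': "q' \<in> X" "Min ((\<lambda>x. r g x + r h x) ` X) = r g q' + r h q'" using mex by blast
                have "r h q \<le> r h q' + dist q' q" "dist q' q \<le> r g q' + r g q" using v1[of h q q'] v2[of g q' q] RRR q q' by (simp_all add: dist_commute)
                moreover have "Min ((\<lambda>x. r f x + r h x) ` X) \<le> r f q + r h q" using mle q by blast
                ultimately show ?thesis using RRR False fh q q' by simp
              qed
            qed
        qed
      qed
    qed
  qed
  have sym: "amal X r a b = amal X r b a" for a b
    by (cases a; cases b) (auto simp: dist_commute add.commute)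
  have refl: "amal X r a a = 0" for a by (cases a) auto
  show ?thesis unfolding pm_def using tri sym refl by blast
qed


lemma good_iter:
  assumes g: "good n F p" and y: "y \<in> F"
  shows "(p ^^ m) y \<in> F"
  using y
proof (induction m)
  case (Suc m) then show ?case using g unfolding good_def by auto
qed simp

lemma good_iter_dist:
  assumes g: "good n F p" and y: "y \<in> F" "y' \<in> F"
  shows "dist ((p ^^ m) y) ((p ^^ m) y') = dist y y'"
proof (induction m)
  case (Suc m)
  have "(p ^^ m) y \<in> F" "(p ^^ m) y' \<in> F" using good_iter[OF g] y by auto
  then show ?case using g Suc unfolding good_def by auto
qed simp

lemma good_surj:
  assumes g: "good n F p"
  shows "p ` F = F"
proof (rule endo_inj_surj)
  show "finite F" "p ` F \<subseteq> F" using g unfolding good_def by auto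
  show "inj_on p F"
  proof (rule inj_onI)
    fix a b assume "a \<in> F" "b \<in> F" "p a = p b"
    then have "dist a b = 0" using g unfolding good_def by (metis dist_self)
    then show "a = b" by simp
  qed
qed

lemma step_A:
  fixes F :: "'a::metric_space set"
  assumes U: "urysohn_extension_property TYPE('a)" and n: "n > 0" and g: "good n F p" and F: "F \<noteq> {}"
  shows "\<exists>F' p'. good n F' p' \<and> F \<subseteq> F' \<and> x \<in> F' \<and> (\<forall>y\<in>F. p' y = p y)"
proof -
  have finF: "finite F" and pF: "\<And>y. y \<in> F \<Longrightarrow> p y \<in> F" and perF: "\<And>y. y \<in> F \<Longrightarrow> (p ^^ n) y = y"
    using g unfolding good_def by auto
  define r where "r k f = dist x ((p ^^ (n - k)) f)" for k f
  define Y where "Y = {..<n}"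
  define I where "I = Inl ` F \<union> Inr ` Y"
  have val: "\<forall>k\<in>Y. \<forall>f\<in>F. \<forall>f'\<in>F. \<bar>r k f - r k f'\<bar> \<le> dist f f' \<and> dist f f' \<le> r k f + r k f'"
  proof (intro ballI)
    fix k f f' assume "k \<in> Y" "f \<in> F" "f' \<in> F"
    then have d: "dist ((p ^^ (n - k)) f) ((p ^^ (n - k)) f') = dist f f'" using good_iter_dist[OF g] by blast
    have "dist x ((p ^^ (n - k)) f) \<le> dist x ((p ^^ (n - k)) f') + dist ((p ^^ (n - k)) f) ((p ^^ (n - k)) f')"
      "dist x ((p ^^ (n - k)) f') \<le> dist x ((p ^^ (n - k)) f) + dist ((p ^^ (n - k)) f) ((p ^^ (n - k)) f')"
      "dist ((p ^^ (n - k)) f) ((p ^^ (n - k)) f') \<le> dist x ((p ^^ (n - k)) f) + dist x ((p ^^ (n - k)) f')"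
      by (metis dist_commute dist_triangle)+
    then show "\<bar>r k f - r k f'\<bar> \<le> dist f f' \<and> dist f f' \<le> r k f + r k f'"
      unfolding r_def d by linarith
  qed
  have pmI: "pm I (amal F r)" unfolding I_def by (rule amal_pm[OF finF F val])
  define J :: "('a + nat) set" where "J = Inl ` F \<union> {Inr 0}"
  define e :: "'a + nat \<Rightarrow> 'a" where "e = case_sum id (\<lambda>_. x)"
  have finI: "finite I" unfolding I_def Y_def using finF by simp
  have JI: "J \<subseteq> I" "J \<noteq> {}" unfolding J_def I_def Y_def using n by auto
  have isoJ: "\<forall>i\<in>J. \<forall>j\<in>J. dist (e i) (e j) = amal F r i j"
    unfolding J_def e_def r_def using perF by (auto simp: dist_commute)
  obtain e' where e': "\<forall>i\<in>J. e' i = e i" "\<forall>i\<in>I. \<forall>j\<in>I. dist (e' i) (e' j) = amal F r i j"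
    using ext_realize[OF U pmI finI JI isoJ] by blast
  define \<sigma> where "\<sigma> = case_sum (\<lambda>f. Inl (p f)) (\<lambda>k. Inr (Suc k mod n))"
  have sI: "\<sigma> ` I \<subseteq> I" unfolding I_def Y_def \<sigma>_def using pF n by auto
  have rsh: "r (Suc k mod n) (p f) = r k f" if "k < n" "f \<in> F" for k f
  proof (cases "Suc k < n")
    case True
    have e: "n - k = Suc (n - Suc k)" using True by simp
    have "(p ^^ (n - k)) f = (p ^^ (n - Suc k)) (p f)" by (simp only: e funpow_Suc_right comp_def)
    then have "(p ^^ (n - Suc k mod n)) (p f) = (p ^^ (n - k)) f" using True by simp
    then show ?thesis unfolding r_def by simp
  next
    case False
    then have "Suc k = n" using that by simp
    then have "(p ^^ (n - Suc k mod n)) (p f) = (p ^^ (n - k)) f"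
      using perF[OF pF[OF that(2)]] by auto
    then show ?thesis unfolding r_def by simp
  qed
  have imgeq: "(\<lambda>f. r (Suc k mod n) f + r (Suc l mod n) f) ` F = (\<lambda>f. r k f + r l f) ` F"
    if "k < n" "l < n" for k l
  proof -
    have "(\<lambda>f. r (Suc k mod n) f + r (Suc l mod n) f) ` F = (\<lambda>f. r (Suc k mod n) f + r (Suc l mod n) f) ` (p ` F)"
      using good_surj[OF g] by simp
    also have "\<dots> = (\<lambda>f. r (Suc k mod n) (p f) + r (Suc l mod n) (p f)) ` F" by (simp add: image_image)
    also have "\<dots> = (\<lambda>f. r k f + r l f) ` F" using rsh that by (intro image_cong) auto
    finally show ?thesis .
  qed
  have modinj: "(Suc k mod n = Suc l mod n) = (k = l)" if "k < n" "l < n" for k l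
    using that by (metis Suc_lessI mod_Suc mod_less n nat.inject old.nat.distinct(2))
  have inv: "\<forall>i\<in>I. \<forall>j\<in>I. amal F r (\<sigma> i) (\<sigma> j) = amal F r i j"
  proof (intro ballI)
    fix i j assume "i \<in> I" "j \<in> I"
    then show "amal F r (\<sigma> i) (\<sigma> j) = amal F r i j"
      unfolding I_def Y_def \<sigma>_def using rsh imgeq modinj pF good_iter_dist[OF g, of _ _ 1]
      by (auto simp: dist_commute)
  qed
  have sit: "(\<sigma> ^^ m) (Inl f) = Inl ((p ^^ m) f)" for m f
    by (induction m) (auto simp: \<sigma>_def)
  have sit2: "(\<sigma> ^^ m) (Inr k) = Inr ((k + m) mod n)" if "k < n" for m k
    using that by (induction m) (auto simp: \<sigma>_def mod_Suc_eq)
  have per: "\<forall>i\<in>I. (\<sigma> ^^ n) i = i"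
    unfolding I_def Y_def using sit sit2 perF by auto
  obtain p' where p': "good n (e' ` I) p'" "\<forall>i\<in>I. p' (e' i) = e' (\<sigma> i)"
    using cyc_realize[OF pmI finI sI inv per e'(2)] by blast
  have FI: "F \<subseteq> e' ` I"
  proof
    fix y assume "y \<in> F"
    then have "Inl y \<in> J" "Inl y \<in> I" unfolding J_def I_def by auto
    then show "y \<in> e' ` I" using e'(1) unfolding e_def by force
  qed
  have xI: "x \<in> e' ` I"
  proof -
    have "Inr 0 \<in> J" "Inr 0 \<in> I" unfolding J_def I_def Y_def using n by auto
    then show ?thesis using e'(1) unfolding e_def by force
  qed
  have "p' y = p y" if "y \<in> F" for y
  proof -
    have "Inl y \<in> J" "Inl y \<in> I" "Inl (p y) \<in> J" unfolding J_def I_def using that pF by auto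
    then show ?thesis using p'(2) e'(1) unfolding e_def \<sigma>_def by force
  qed
  then show ?thesis using p'(1) FI xI by blast
qed


lemma dense_countable:
  obtains dseq :: "nat \<Rightarrow> 'a::{metric_space,second_countable_topology}"
  where "closure (range dseq) = UNIV"
proof -
  obtain D :: "'a set" where D: "countable D" "D \<noteq> {}" "\<And>U. open U \<Longrightarrow> U \<noteq> {} \<Longrightarrow> \<exists>y \<in> D. y \<in> U"
    using countable_dense_exists by blast
  have "x \<in> closure D" for x
    unfolding closure_approachable
  proof (intro allI impI)
    fix e :: real assume "e > 0"
    then obtain y where "y \<in> D" "y \<in> ball x e" using D(3)[of "ball x e"] by auto
    then show "\<exists>y\<in>D. dist y x < e" by (auto simp: dist_commute)
  qed
  then have "closure (range (from_nat_into D)) = UNIV" using D by auto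
  then show ?thesis using that by blast
qed

lemma step_B:
  fixes F :: "'a::polish_space set"
  assumes U: "urysohn_extension_property TYPE('a)" and n: "n > 0" and g: "good n F p" and F: "F \<noteq> {}"
  shows "\<exists>h\<in>isometries. h ^^ n = id \<and> (\<forall>y\<in>F. h y = p y)"
proof -
  obtain dseq :: "nat \<Rightarrow> 'a" where dense: "closure (range dseq) = UNIV" using dense_countable by blast
  define P where "P k G q G' q' \<longleftrightarrow> good n G' q' \<and> G \<subseteq> G' \<and> dseq k \<in> G' \<and> (\<forall>y\<in>G. q' y = q y)"
    for k and G G' :: "'a set" and q q' :: "'a \<Rightarrow> 'a"
  define st where "st = rec_nat (F, p) (\<lambda>k s. SOME s'. P k (fst s) (snd s) (fst s') (snd s'))"
  have st0: "st 0 = (F, p)" unfolding st_def by simp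
  have stS: "st (Suc k) = (SOME s'. P k (fst (st k)) (snd (st k)) (fst s') (snd s'))" for k
    unfolding st_def by simp
  have inv: "good n (fst (st k)) (snd (st k)) \<and> fst (st k) \<noteq> {} \<and>
     P k (fst (st k)) (snd (st k)) (fst (st (Suc k))) (snd (st (Suc k)))" for k
  proof (induction k)
    case 0
    obtain F' p' where "good n F' p' \<and> F \<subseteq> F' \<and> dseq 0 \<in> F' \<and> (\<forall>y\<in>F. p' y = p y)"
      using step_A[OF U n g F] by blast
    then have ex: "\<exists>s'. P 0 (fst (st 0)) (snd (st 0)) (fst s') (snd s')" unfolding P_def st0 by auto
    show ?case using someI_ex[OF ex] g F unfolding stS st0 by simp
  next
    case (Suc k)
    then have g': "good n (fst (st (Suc k))) (snd (st (Suc k)))" and ne: "fst (st (Suc k)) \<noteq> {}"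
      unfolding P_def by auto
    obtain F' p' where "good n F' p' \<and> fst (st (Suc k)) \<subseteq> F' \<and> dseq (Suc k) \<in> F' \<and> (\<forall>y\<in>fst (st (Suc k)). p' y = snd (st (Suc k)) y)"
      using step_A[OF U n g' ne] by blast
    then have ex: "\<exists>s'. P (Suc k) (fst (st (Suc k))) (snd (st (Suc k))) (fst s') (snd s')" unfolding P_def by auto
    show ?case using someI_ex[OF ex] g' ne unfolding stS[of "Suc k"] by simp
  qed
  define G where "G k = fst (st k)" for k
  define q where "q k = snd (st k)" for k
  have gk: "good n (G k) (q k)" for k using inv unfolding G_def q_def by blast
  have Gsuc: "G k \<subseteq> G (Suc k)" "\<forall>y\<in>G k. q (Suc k) y = q k y" "dseq k \<in> G (Suc k)" for k
    using inv[of k] unfolding P_def G_def q_def by auto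
  have mono: "G k \<subseteq> G k' \<and> (\<forall>y\<in>G k. q k' y = q k y)" if "k \<le> k'" for k k'
    using that
  proof (induction k' rule: dec_induct)
    case base then show ?case by simp
  next
    case (step m) then show ?case using Gsuc[of m] by auto
  qed
  define D where "D = (\<Union>k. G k)"
  define h0 where "h0 y = q (LEAST k. y \<in> G k) y" for y
  have h0q: "h0 y = q k y" if "y \<in> G k" for y k
  proof -
    have "(LEAST k. y \<in> G k) \<le> k" "y \<in> G (LEAST k. y \<in> G k)" using that by (auto intro: Least_le LeastI)
    then show ?thesis unfolding h0_def using mono by auto
  qed
  have qG: "q k y \<in> G k" if "y \<in> G k" for k y using gk[of k] that unfolding good_def by auto
  have h0it: "(h0 ^^ m) y = (q k ^^ m) y" if "y \<in> G k" for m y k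
  proof (induction m)
    case (Suc m)
    have "(q k ^^ m) y \<in> G k" using good_iter[OF gk that] .
    then show ?case using Suc h0q by simp
  qed simp
  have h0D: "h0 y \<in> D" if yD: "y \<in> D" for y
  proof -
    obtain k where k: "y \<in> G k" using yD unfolding D_def by blast
    then have "h0 y \<in> G k" using h0q[OF k] qG[OF k] by simp
    then show ?thesis unfolding D_def by blast
  qed
  have h0per: "(h0 ^^ n) y = y" if "y \<in> D" for y
    using that h0it gk unfolding D_def good_def by auto
  have h0iso: "dist (h0 x) (h0 y) = dist x y" if xyD: "x \<in> D" "y \<in> D" for x y
  proof -
    obtain k k' where "x \<in> G k" "y \<in> G k'" using xyD unfolding D_def by auto
    then have "x \<in> G (max k k')" "y \<in> G (max k k')" using mono[of k "max k k'"] mono[of k' "max k k'"] by auto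
    then show ?thesis using h0q gk[of "max k k'"] unfolding good_def by auto
  qed
  have clD: "closure D = UNIV"
  proof -
    have "range dseq \<subseteq> D" using Gsuc(3) unfolding D_def by auto
    then show ?thesis using dense closure_mono by blast
  qed
  have uc: "uniformly_continuous_on D h0"
    unfolding uniformly_continuous_on_def using h0iso by (metis dist_commute)
  obtain h where h: "uniformly_continuous_on (closure D) h" "\<And>x. x \<in> D \<Longrightarrow> h0 x = h x"
    using uniformly_continuous_on_extension_on_closure[OF uc] by metis
  have hc: "continuous_on UNIV h" using h(1) clD uniformly_continuous_imp_continuous by metis
  have hcl: "closure D \<subseteq> {x. f x = g x}" if "continuous_on UNIV f" "continuous_on UNIV g" "\<forall>x\<in>D. f x = g x"
    for f g :: "'a \<Rightarrow> real" 
    using that closed_Collect_eq[OF that(1,2)] by (intro closure_minimal) auto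
  have hcl2: "closure D \<subseteq> {x. f x = g x}" if "continuous_on UNIV f" "continuous_on UNIV g" "\<forall>x\<in>D. f x = g x"
    for f g :: "'a \<Rightarrow> 'a" 
    using that closed_Collect_eq[OF that(1,2)] by (intro closure_minimal) auto
  have iso1: "dist (h x) (h y) = dist x y" if "x \<in> D" for x y
  proof -
    have "closure D \<subseteq> {y. dist (h x) (h y) = dist x y}"
      by (rule hcl) (auto intro!: continuous_intros hc h0iso that simp: h(2)[symmetric] that)
    then show ?thesis using clD by auto
  qed
  have iso: "dist (h x) (h y) = dist x y" for x y
  proof -
    have "closure D \<subseteq> {x. dist (h x) (h y) = dist x y}"
      by (rule hcl) (auto intro!: continuous_intros hc iso1)
    then show ?thesis using clD by auto
  qed
  have hit_c: "continuous_on UNIV (h ^^ m)" for m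
  proof (induction m)
    case 0 then show ?case by (simp add: continuous_on_id)
  next
    case (Suc m)
    have "continuous_on UNIV (\<lambda>x. h ((h ^^ m) x))" by (rule continuous_on_compose2[OF hc Suc]) auto
    then show ?case by (simp add: o_def)
  qed
  have hit: "(h ^^ m) y = (h0 ^^ m) y" if "y \<in> D" for y m
  proof (induction m)
    case (Suc m)
    have "(h0 ^^ m) y \<in> D"
    proof (induction m)
      case (Suc m) then show ?case using h0D by simp
    qed (use that in simp)
    then show ?case using Suc h(2) by simp
  qed simp
  have hper: "h ^^ n = id"
  proof
    fix x
    have "closure D \<subseteq> {x. (h ^^ n) x = id x}"
      by (rule hcl2) (auto intro!: hit_c continuous_on_id simp: hit h0per)
    then show "(h ^^ n) x = id x" using clD by auto
  qed
  have "surj h"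
  proof -
    obtain m where "n = Suc m" using n not0_implies_Suc by blast
    then have "h ((h ^^ m) x) = x" for x using hper by (metis comp_apply funpow.simps(2) id_apply)
    then show ?thesis by (metis surj_def)
  qed
  then have "h \<in> isometries" unfolding isometries_def using iso by auto
  moreover have "\<forall>y\<in>F. h y = p y"
  proof
    fix y assume "y \<in> F"
    then have "y \<in> G 0" unfolding G_def st0 by simp
    then have "y \<in> G 0" "y \<in> D" unfolding D_def by blast+
    then show "h y = p y" using h(2) h0q[of y 0] unfolding q_def st0 by simp
  qed
  ultimately show ?thesis using hper by blast
qed


definition cst :: "('a::metric_space \<Rightarrow> 'a) \<Rightarrow> 'a \<Rightarrow> 'a \<Rightarrow> int \<Rightarrow> real" where
  "cst g a b m = (if m \<ge> 0 then dist a ((g ^^ nat m) b) else dist ((g ^^ nat (- m)) a) b)"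

lemma iso_iter:
  assumes "g \<in> isometries"
  shows "dist ((g ^^ k) x) ((g ^^ k) y) = dist x y"
  using assms by (induction k) (auto simp: isometries_def)

lemma cst_lift:
  assumes g: "g \<in> isometries"
  shows "dist ((g ^^ P) a) ((g ^^ Q) b) = cst g a b (int Q - int P)"
proof (cases "P \<le> Q")
  case True
  then have "(g ^^ Q) b = (g ^^ P) ((g ^^ (Q - P)) b)"
    by (metis funpow_add le_add_diff_inverse o_apply)
  then show ?thesis using True iso_iter[OF g] unfolding cst_def
    by (simp add: nat_diff_distrib')
next
  case False
  then have "(g ^^ P) a = (g ^^ Q) ((g ^^ (P - Q)) a)"
    by (metis funpow_add le_add_diff_inverse o_apply nle_le)
  then show ?thesis using False iso_iter[OF g] unfolding cst_def
    by (simp add: nat_diff_distrib')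
qed

lemma cst_tri:
  assumes g: "g \<in> isometries"
  shows "cst g a c (m1 + m2) \<le> cst g a b m1 + cst g b c m2"
proof -
  define N where "N = \<bar>m1\<bar> + \<bar>m2\<bar>"
  define P where "P = nat N"
  define Q where "Q = nat (N + m1)"
  define R where "R = nat (N + m1 + m2)"
  have e1: "m1 = int Q - int P" and e2: "m2 = int R - int Q" and e3: "m1 + m2 = int R - int P"
    unfolding P_def Q_def R_def N_def by auto
  have "cst g a b m1 = dist ((g ^^ P) a) ((g ^^ Q) b)" unfolding e1 by (rule cst_lift[OF g, symmetric])
  moreover have "cst g b c m2 = dist ((g ^^ Q) b) ((g ^^ R) c)" unfolding e2 by (rule cst_lift[OF g, symmetric])
  moreover have "cst g a c (m1 + m2) = dist ((g ^^ P) a) ((g ^^ R) c)" unfolding e3 by (rule cst_lift[OF g, symmetric])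
  ultimately show ?thesis
    using dist_triangle[of "(g ^^ P) a" "(g ^^ R) c" "(g ^^ Q) b"] by simp
qed

lemma cst_sym: "cst g a b m = cst g b a (- m)"
  unfolding cst_def by (auto simp: dist_commute)

lemma cst_nn: "cst g a b m \<ge> 0"
  unfolding cst_def by auto

definition Ms :: "nat \<Rightarrow> int \<Rightarrow> int set" where
  "Ms n d = {m. - int n < m \<and> m < int n \<and> m mod int n = d mod int n}"

lemma Ms_fin: "finite (Ms n d)"
  by (rule finite_subset[of _ "{- int n<..<int n}"]) (auto simp: Ms_def)

lemma Ms_ne: "n > 0 \<Longrightarrow> d mod int n \<in> Ms n d"
  unfolding Ms_def by (auto intro: less_le_trans[of _ 0])

lemma Ms_zero: "Ms n 0 = {0}" if "n > 0"
proof -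
  have "m = 0" if mm: "- int n < m" "m < int n" "m mod int n = 0" for m
  proof -
    obtain k where k: "m = int n * k" using mm(3) by (metis mod_0_imp_dvd dvd_def)
    have "k = 0"
    proof (rule ccontr)
      assume "k \<noteq> 0"
      then have "\<bar>k\<bar> \<ge> 1" by simp
      then have "int n * 1 \<le> int n * \<bar>k\<bar>" by (intro mult_left_mono) auto
      moreover have "\<bar>m\<bar> = int n * \<bar>k\<bar>" unfolding k by (simp add: abs_mult)
      ultimately show False using mm(1,2) by linarith
    qed
    then show ?thesis using k by simp
  qed
  then show ?thesis using that unfolding Ms_def by auto
qed

lemma Ms_neg: "m \<in> Ms n d \<Longrightarrow> - m \<in> Ms n (- d)"
  unfolding Ms_def by (auto simp: mod_minus_eq[of m "int n", symmetric] mod_minus_eq[of d "int n", symmetric]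
    intro: arg_cong[where f="\<lambda>x. (- x) mod int n"])


lemma step_C:
  fixes g :: "'a::metric_space \<Rightarrow> 'a"
  assumes U: "urysohn_extension_property TYPE('a)" and g: "g \<in> isometries"
    and A: "finite A" "A \<noteq> {}" and \<delta>: "\<delta> > 0" and n: "n \<ge> 2"
    and bd: "\<forall>a\<in>A \<union> g ` A. \<forall>b\<in>A \<union> g ` A. dist a b \<le> real n * \<delta>"
  shows "\<exists>F p. good n F p \<and> F \<noteq> {} \<and> A \<subseteq> F \<and> (\<forall>a\<in>A. dist (p a) (g a) \<le> \<delta>)"
proof -
  define B where "B = A \<union> g ` A"
  define C where "C = real n * \<delta>"
  have C0: "C \<ge> 0" unfolding C_def using \<delta> by simp
  have n0: "n > 0" using n by simp
  define cost where "cost a b m = cst g a b m + real_of_int \<bar>m\<bar> * \<delta>" for a b m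
  define \<rho> :: "int \<times> 'a \<Rightarrow> int \<times> 'a \<Rightarrow> real" where
    "\<rho> x y = min C (Min ((\<lambda>m. cost (snd x) (snd y) m) ` Ms n (fst y - fst x)))" for x y
  have cnn: "cost a b m \<ge> 0" for a b m unfolding cost_def using cst_nn[of g a b m] \<delta> by simp
  have mle: "Min ((\<lambda>m. cost a b m) ` Ms n d) \<le> cost a b m" if "m \<in> Ms n d" for a b d m
    using that Ms_fin by (intro Min_le) auto
  have mex: "\<exists>m\<in>Ms n d. Min ((\<lambda>m. cost a b m) ` Ms n d) = cost a b m" for a b d
  proof -
    have "Min ((\<lambda>m. cost a b m) ` Ms n d) \<in> (\<lambda>m. cost a b m) ` Ms n d"
      using Ms_fin Ms_ne[OF n0] by (intro Min_in) auto
    then show ?thesis by auto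
  qed
  have Msmod: "Ms n d1 = Ms n d2" if "d1 mod int n = d2 mod int n" for d1 d2
    using that unfolding Ms_def by simp
  define I where "I = {0..<int n} \<times> B"
  have finI: "finite I" unfolding I_def B_def using A by simp
  have rfl: "\<rho> x x = 0" for x
  proof -
    have "Min ((\<lambda>m. cost (snd x) (snd x) m) ` Ms n 0) = 0"
      using Ms_zero[OF n0] by (simp add: cost_def cst_def)
    then show ?thesis unfolding \<rho>_def using C0 by simp
  qed
  have sym: "\<rho> x y = \<rho> y x" for x y
  proof -
    have neg: "- m \<in> Ms n (fst x - fst y)" if "m \<in> Ms n (fst y - fst x)" for m
      using Ms_neg[OF that] by simp
    have neg2: "- m \<in> Ms n (fst y - fst x)" if "m \<in> Ms n (fst x - fst y)" for m
      using Ms_neg[OF that] by simp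
    have "Ms n (fst x - fst y) = uminus ` Ms n (fst y - fst x)"
    proof
      show "uminus ` Ms n (fst y - fst x) \<subseteq> Ms n (fst x - fst y)" using neg by blast
      show "Ms n (fst x - fst y) \<subseteq> uminus ` Ms n (fst y - fst x)"
      proof
        fix m assume "m \<in> Ms n (fst x - fst y)"
        then have "- m \<in> Ms n (fst y - fst x)" using neg2 by blast
        then show "m \<in> uminus ` Ms n (fst y - fst x)" by (rule rev_image_eqI) simp
      qed
    qed
    moreover have cs: "cost (snd y) (snd x) (- m) = cost (snd x) (snd y) m" for m
      using cst_sym[of g "snd y" "snd x" "- m"] unfolding cost_def by simp
    ultimately have "(\<lambda>m. cost (snd y) (snd x) m) ` Ms n (fst x - fst y) = (\<lambda>m. cost (snd x) (snd y) m) ` Ms n (fst y - fst x)"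
      by (simp add: image_image cs)
    then show ?thesis unfolding \<rho>_def by simp
  qed
  have tri: "\<rho> x z \<le> \<rho> x y + \<rho> y z" for x y z
  proof -
    obtain m1 where m1: "m1 \<in> Ms n (fst y - fst x)"
      "Min ((\<lambda>m. cost (snd x) (snd y) m) ` Ms n (fst y - fst x)) = cost (snd x) (snd y) m1" using mex by blast
    obtain m2 where m2: "m2 \<in> Ms n (fst z - fst y)"
      "Min ((\<lambda>m. cost (snd y) (snd z) m) ` Ms n (fst z - fst y)) = cost (snd y) (snd z) m2" using mex by blast
    have s1: "\<rho> x y = min C (cost (snd x) (snd y) m1)" "\<rho> y z = min C (cost (snd y) (snd z) m2)"
      unfolding \<rho>_def m1 m2 by auto
    have abs_tri: "real_of_int \<bar>m1 + m2\<bar> \<le> real_of_int \<bar>m1\<bar> + real_of_int \<bar>m2\<bar>"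
      by (simp only: of_int_add[symmetric] of_int_le_iff abs_triangle_ineq)
    have ct: "cost (snd x) (snd z) (m1 + m2) \<le> cost (snd x) (snd y) m1 + cost (snd y) (snd z) m2"
    proof -
      have "real_of_int \<bar>m1 + m2\<bar> * \<delta> \<le> (real_of_int \<bar>m1\<bar> + real_of_int \<bar>m2\<bar>) * \<delta>"
        using \<delta> abs_tri by (intro mult_right_mono) auto
      then show ?thesis unfolding cost_def using cst_tri[OF g, of "snd x" "snd z" m1 m2 "snd y"]
        by (simp add: distrib_right)
    qed
    have "\<rho> x z \<le> min C (cost (snd x) (snd y) m1 + cost (snd y) (snd z) m2)"
    proof (cases "\<bar>m1 + m2\<bar> < int n")
      case True
      have mm1: "m1 mod int n = (fst y - fst x) mod int n" and mm2: "m2 mod int n = (fst z - fst y) mod int n"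
        using m1(1) m2(1) unfolding Ms_def by auto
      have "(m1 + m2) mod int n = (m1 mod int n + m2 mod int n) mod int n" by (simp add: mod_add_eq)
      also have "\<dots> = ((fst y - fst x) mod int n + (fst z - fst y) mod int n) mod int n" using mm1 mm2 by simp
      also have "\<dots> = ((fst y - fst x) + (fst z - fst y)) mod int n" by (simp add: mod_add_eq)
      also have "\<dots> = (fst z - fst x) mod int n" by simp
      finally have "(m1 + m2) mod int n = (fst z - fst x) mod int n" .
      then have "m1 + m2 \<in> Ms n (fst z - fst x)" using True unfolding Ms_def by auto
      then have "Min ((\<lambda>m. cost (snd x) (snd z) m) ` Ms n (fst z - fst x)) \<le> cost (snd x) (snd z) (m1 + m2)"
        by (rule mle)
      then have "\<rho> x z \<le> min C (cost (snd x) (snd z) (m1 + m2))"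
        unfolding \<rho>_def by (rule min.mono[OF order_refl])
      then show ?thesis using ct by linarith
    next
      case False
      have "real_of_int \<bar>m1 + m2\<bar> * \<delta> \<le> (real_of_int \<bar>m1\<bar> + real_of_int \<bar>m2\<bar>) * \<delta>"
        using \<delta> abs_tri by (intro mult_right_mono) auto
      moreover have "real n * \<delta> \<le> real_of_int \<bar>m1 + m2\<bar> * \<delta>"
        using \<delta> False by (intro mult_right_mono) auto
      moreover have "cost (snd x) (snd y) m1 + cost (snd y) (snd z) m2 =
          cst g (snd x) (snd y) m1 + cst g (snd y) (snd z) m2 + (real_of_int \<bar>m1\<bar> + real_of_int \<bar>m2\<bar>) * \<delta>"
        unfolding cost_def by (simp add: distrib_right)
      ultimately have "C \<le> cost (snd x) (snd y) m1 + cost (snd y) (snd z) m2"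
        unfolding C_def using cst_nn[of g "snd x" "snd y" m1] cst_nn[of g "snd y" "snd z" m2] by linarith
      then show ?thesis unfolding \<rho>_def by linarith
    qed
    then show ?thesis unfolding s1 using cnn[of "snd x" "snd y" m1] cnn[of "snd y" "snd z" m2] C0
      by linarith
  qed
  have pmI: "pm I \<rho>" unfolding pm_def by (intro conjI ballI rfl sym tri)
  define \<sigma> :: "int \<times> 'a \<Rightarrow> int \<times> 'a" where "\<sigma> x = ((fst x + 1) mod int n, snd x)" for x
  have sI: "\<sigma> ` I \<subseteq> I" unfolding I_def \<sigma>_def using n0 by auto
  have inv: "\<forall>i\<in>I. \<forall>j\<in>I. \<rho> (\<sigma> i) (\<sigma> j) = \<rho> i j"
  proof (intro ballI)
    fix x y assume "x \<in> I" "y \<in> I"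
    have "((fst y + 1) mod int n - (fst x + 1) mod int n) mod int n = (fst y - fst x) mod int n"
      by (simp add: mod_diff_eq)
    then have "Ms n ((fst y + 1) mod int n - (fst x + 1) mod int n) = Ms n (fst y - fst x)" by (rule Msmod)
    then show "\<rho> (\<sigma> x) (\<sigma> y) = \<rho> x y" unfolding \<rho>_def \<sigma>_def by simp
  qed
  have sit: "(\<sigma> ^^ m) x = ((fst x + int m) mod int n, snd x)" if "x \<in> I" for x m
  proof (induction m)
    case 0 then show ?case using that unfolding I_def by auto
  next
    case (Suc m)
    have e: "((fst x + int m) mod int n + 1) mod int n = (fst x + int (Suc m)) mod int n"
      by (simp add: mod_add_left_eq add.assoc add.commute[of "int m" 1])
    have "(\<sigma> ^^ Suc m) x = \<sigma> ((fst x + int m) mod int n, snd x)" using Suc by simp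
    also have "\<dots> = ((fst x + int (Suc m)) mod int n, snd x)" unfolding \<sigma>_def using e by simp
    finally show ?case .
  qed
  have per: "\<forall>i\<in>I. (\<sigma> ^^ n) i = i"
  proof
    fix x assume x: "x \<in> I"
    then have "(fst x + int n) mod int n = fst x" unfolding I_def by auto
    then show "(\<sigma> ^^ n) x = x" using sit[OF x] by (cases x) simp
  qed
  define J where "J = {0::int} \<times> B"
  have JI: "J \<subseteq> I" "J \<noteq> {}" unfolding J_def I_def B_def using n0 A by auto
  have isoJ: "\<forall>i\<in>J. \<forall>j\<in>J. dist (snd i) (snd j) = \<rho> i j"
  proof (intro ballI)
    fix x y assume xy: "x \<in> J" "y \<in> J"
    then have "fst x = 0" "fst y = 0" "snd x \<in> B" "snd y \<in> B" unfolding J_def by auto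
    then have "\<rho> x y = min C (dist (snd x) (snd y))" unfolding \<rho>_def using Ms_zero[OF n0]
      by (simp add: cost_def cst_def)
    moreover have "dist (snd x) (snd y) \<le> C" using bd \<open>snd x \<in> B\<close> \<open>snd y \<in> B\<close> unfolding B_def C_def by blast
    ultimately show "dist (snd x) (snd y) = \<rho> x y" by simp
  qed
  obtain e' where e': "\<forall>i\<in>J. e' i = snd i" "\<forall>i\<in>I. \<forall>j\<in>I. dist (e' i) (e' j) = \<rho> i j"
    using ext_realize[OF U pmI finI JI isoJ] by blast
  obtain p where p: "good n (e' ` I) p" "\<forall>i\<in>I. p (e' i) = e' (\<sigma> i)"
    using cyc_realize[OF pmI finI sI inv per e'(2)] by blast
  have AF: "A \<subseteq> e' ` I"
  proof
    fix a assume "a \<in> A"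
    then have "(0, a) \<in> J" "(0, a) \<in> I" using JI unfolding J_def B_def by auto
    then show "a \<in> e' ` I" using e'(1) by (intro image_eqI[of _ _ "(0, a)"]) auto
  qed
  have "dist (p a) (g a) \<le> \<delta>" if a: "a \<in> A" for a
  proof -
    have in1: "(0, a) \<in> J" "(0, a) \<in> I" "(0, g a) \<in> J" "(0, g a) \<in> I" "(1, a) \<in> I"
      using JI a n unfolding J_def B_def I_def by auto
    have "\<sigma> (0, a) = (1, a)" unfolding \<sigma>_def using n by simp
    moreover have "e' (0, a) = a" "e' (0, g a) = g a" using e'(1) in1 by auto
    ultimately have "p a = e' (1, a)" using p(2) in1 by metis
    moreover have "dist (e' (1, a)) (e' (0, g a)) = \<rho> (1, a) (0, g a)" using e'(2) in1 by blast
    ultimately have "dist (p a) (g a) = \<rho> (1, a) (0, g a)" using \<open>e' (0, g a) = g a\<close> by simp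
    also have "\<dots> \<le> cost a (g a) (-1)"
    proof -
      have "-1 \<in> Ms n (0 - 1)" unfolding Ms_def using n by auto
      then show ?thesis unfolding \<rho>_def using mle by (simp add: min.coboundedI2)
    qed
    also have "\<dots> = \<delta>" unfolding cost_def cst_def by simp
    finally show ?thesis .
  qed
  moreover have "e' ` I \<noteq> {}" using JI by auto
  ultimately show ?thesis using p(1) AF by blast
qed


lemma core:
  fixes g :: "'a::polish_space \<Rightarrow> 'a"
  assumes U: "urysohn_extension_property TYPE('a)" and g: "g \<in> isometries"
    and A0: "finite A0" and \<epsilon>: "\<epsilon> > 0" and S: "infinite S"
  shows "\<exists>h. (h \<in> isometries \<and> (\<exists>n\<in>S. n > 0 \<and> h ^^ n = id)) \<and> (\<forall>a\<in>A0. dist (h a) (g a) < \<epsilon>)"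
proof -
  define A where "A = insert undefined A0"
  have A: "finite A" "A \<noteq> {}" unfolding A_def using A0 by auto
  define \<delta> where "\<delta> = \<epsilon> / 2"
  have \<delta>: "\<delta> > 0" "\<delta> < \<epsilon>" unfolding \<delta>_def using \<epsilon> by auto
  define B where "B = A \<union> g ` A"
  define K where "K = Max ((\<lambda>x. dist (fst x) (snd x)) ` (B \<times> B))"
  have finB: "finite (B \<times> B)" unfolding B_def using A by simp
  have Kb: "dist a b \<le> K" if "a \<in> B" "b \<in> B" for a b
    unfolding K_def using finB that by (intro Max_ge) (auto intro: image_eqI[of _ _ "(a, b)"])
  obtain n where n: "n \<in> S" "n \<ge> max 2 (nat \<lceil>K / \<delta>\<rceil>)"
    using S unfolding infinite_nat_iff_unbounded_le by blast
  have n2: "n \<ge> 2" using n by simp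
  have "K / \<delta> \<le> real n" using n(2) by linarith
  then have "K \<le> real n * \<delta>" using \<delta> by (simp add: divide_le_eq)
  then have bd: "\<forall>a\<in>A \<union> g ` A. \<forall>b\<in>A \<union> g ` A. dist a b \<le> real n * \<delta>"
  proof (intro ballI)
    fix a b assume "a \<in> A \<union> g ` A" "b \<in> A \<union> g ` A"
    then have "dist a b \<le> K" using Kb unfolding B_def by blast
    then show "dist a b \<le> real n * \<delta>" using \<open>K \<le> real n * \<delta>\<close> by linarith
  qed
  obtain F p where Fp: "good n F p" "F \<noteq> {}" "A \<subseteq> F" "\<forall>a\<in>A. dist (p a) (g a) \<le> \<delta>"
    using step_C[OF U g A \<delta>(1) n2 bd] by blast
  obtain h where h: "h \<in> isometries" "h ^^ n = id" "\<forall>y\<in>F. h y = p y"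
    using step_B[OF U _ Fp(1) Fp(2)] n2 by auto
  have "\<forall>a\<in>A0. dist (h a) (g a) < \<epsilon>"
  proof
    fix a assume "a \<in> A0"
    then have "a \<in> A" "a \<in> F" using Fp(3) unfolding A_def by auto
    then have "h a = p a" "dist (p a) (g a) \<le> \<delta>" using h(3) Fp(4) by auto
    then show "dist (h a) (g a) < \<epsilon>" using \<delta>(2) by simp
  qed
  moreover have "\<exists>n\<in>S. n > 0 \<and> h ^^ n = id" using n(1) n2 h(2) by (intro bexI[of _ n] conjI) auto
  ultimately show ?thesis using h(1) by blast
qed

theorem mainTheorem16:
  fixes S :: "nat set"
  assumes "urysohn_space TYPE('a::polish_space)"
    and "infinite S"
  shows "isometries \<subseteq>
           closure {g :: 'a \<Rightarrow> 'a. g \<in> isometries \<and> (\<exists>n\<in>S. n > 0 \<and> g ^^ n = id)}"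
proof
  fix g :: "'a \<Rightarrow> 'a" assume g: "g \<in> isometries"
  have U: "urysohn_extension_property TYPE('a)" using assms(1) unfolding urysohn_space_def .
  let ?T = "{g :: 'a \<Rightarrow> 'a. g \<in> isometries \<and> (\<exists>n\<in>S. n > 0 \<and> g ^^ n = id)}"
  show "g \<in> closure ?T"
    unfolding closure_iff_nhds_not_empty
  proof (intro allI impI)
    fix W V :: "('a \<Rightarrow> 'a) set" assume VW: "V \<subseteq> W" "open V" "g \<in> V"
    have oV: "openin (product_topology (\<lambda>i. euclidean) UNIV) V" using VW(2) unfolding open_fun_def .
    from product_topology_open_contains_basis[OF oV VW(3)]
    obtain X where X0: "g \<in> (\<Pi>\<^sub>E i\<in>UNIV. X i) \<and> (\<forall>i. openin euclidean (X i)) \<and>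
      finite {i. X i \<noteq> topspace euclidean} \<and> (\<Pi>\<^sub>E i\<in>UNIV. X i) \<subseteq> V"
      by (rule exE)
    note X = conjunct1[OF X0] conjunct1[OF conjunct2[OF X0]] conjunct1[OF conjunct2[OF conjunct2[OF X0]]]
      conjunct2[OF conjunct2[OF conjunct2[OF X0]]]
    define A where "A = {i. X i \<noteq> UNIV}"
    have finA: "finite A" using X(3) unfolding A_def by simp
    have gX: "g i \<in> X i" for i using X(1) by (simp add: PiE_iff)
    have oX: "open (X i)" for i using X(2) by simp
    have ex: "\<forall>i. \<exists>e. e > 0 \<and> ball (g i) e \<subseteq> X i"
    proof
      fix i show "\<exists>e. e > 0 \<and> ball (g i) e \<subseteq> X i" using open_contains_ball_eq[OF oX[of i]] gX[of i] by blast
    qed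
    obtain ee where ee0: "\<forall>i. ee i > 0 \<and> ball (g i) (ee i) \<subseteq> X i" using choice[OF ex] by blast
    have ee: "\<And>i. ee i > 0" "\<And>i. ball (g i) (ee i) \<subseteq> X i" using ee0 by auto
    define \<epsilon> where "\<epsilon> = Min (insert 1 (ee ` A))"
    have \<epsilon>: "\<epsilon> > 0" unfolding \<epsilon>_def
    proof (subst Min_gr_iff)
      show "finite (insert 1 (ee ` A))" using finA by simp
      show "insert 1 (ee ` A) \<noteq> {}" by simp
      show "\<forall>a\<in>insert 1 (ee ` A). 0 < a" using ee(1) by simp
    qed
    have \<epsilon>le: "\<epsilon> \<le> ee i" if "i \<in> A" for i unfolding \<epsilon>_def using finA that by (intro Min_le) auto
    obtain h where h: "h \<in> isometries \<and> (\<exists>n\<in>S. n > 0 \<and> h ^^ n = id)" "\<forall>a\<in>A. dist (h a) (g a) < \<epsilon>"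
      using core[OF U g finA \<epsilon> assms(2)] by blast
    have "h i \<in> X i" for i
    proof (cases "i \<in> A")
      case True
      have "dist (h i) (g i) < \<epsilon>" using h(2) True by blast
      then have "dist (g i) (h i) < ee i" using \<epsilon>le[OF True] by (simp add: dist_commute)
      then show ?thesis using ee(2)[of i] by auto
    next
      case False then show ?thesis unfolding A_def by auto
    qed
    then have "h \<in> (\<Pi>\<^sub>E i\<in>UNIV. X i)" by (simp add: PiE_iff)
    then have "h \<in> W" using subsetD[OF X(4)] subsetD[OF VW(1)] by simp
    moreover have "h \<in> ?T" using h(1) by simp
    ultimately show "?T \<inter> W \<noteq> {}" by (simp add: disjoint_iff) blast
  qed
qed

end
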